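(* Let $H$ be a $d$-degenerate $r$-uniform hypergraph on $n$ vertices, let $\{c_v\}$ be a random local $k$-partition of $H$, and run the greedy procedure described in the context on $H$ and $\{c_v\}$. For $i\in[n]$ and $j\in[k]$ let $X_{ij}$ be the indicator of the event $j\in L(v_i)$, and let $Y_{ij}=1-X_{ij}$. Then: (i) for all $i\in[n]$ and $j\in[k]$, $\mathbb{E}[X_{ij}]\ge (1-1/k^r)^d$; (ii) for each $i\in[n]$, the variables $(Y_{ij})_{j\in[k]}$ are negatively correlated, i.e. for every $J\subseteq[k]$, $\mathbb{P}\big[\bigcap_{j\in J}\{Y_{ij}=1\}\big]\le\prod_{j\in J}\mathbb{P}[Y_{ij}=1]$.
   Context: For a vertex $v$, $E(v)$ is the set of edges containing $v$. A local $k$-partition of $H$ is a collection $\{c_v\}$ of maps $c_v:E(v)\to\{1,\dots,k\}$. A random local $k$-partition is obtained by choosing, for each edge $e=\{v_1,\dots,v_r\}$, the tuple $(c_{v_1}(e),\dots,c_{v_r}(e))$ uniformly at random from $[k]^r$, independently over edges. $H$ is $d$-degenerate if its vertices can be ordered $v_1,\dots,v_n$ so that each back degree $d_i^-$ (the degree of $v_i$ in the subhypergraph induced by $\{v_1,\dots,v_i\}$) is at most $d$. Greedy procedure: fix such an ordering; set $\varphi(v_1)=1$ (and $L(v_1)=[k]$); for $i=2,\dots,n$ in turn, let $L(v_i)=[k]\setminus\{c_{v_i}(e): e\ni v_i,\ e\subseteq\{v_1,\dots,v_i\},\ \varphi(u)=c_u(e)\text{ for all }u\in e\setminus\{v_i\}\}$,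 and set $\varphi(v_i)$ to be the smallest element of $L(v_i)$ if $L(v_i)\neq\emptyset$, and $\varphi(v_i)=1$ otherwise. *)

theory Defs
  imports "HOL-Probability.Probability"
begin

text \<open>Hypergraphs on the vertex set {0..<n}; vertex i plays the role of v_(i+1)
  in the fixed degeneracy ordering v_1,...,v_n. Edges are sets of vertices.\<close>

definition r_uniform_hypergraph :: "nat \<Rightarrow> nat \<Rightarrow> nat set set \<Rightarrow> bool" where
  "r_uniform_hypergraph n r E \<longleftrightarrow> E \<subseteq> Pow {0..<n} \<and> (\<forall>e\<in>E. card e = r)"

definition back_degree :: "nat set set \<Rightarrow> nat \<Rightarrow> nat" where
  "back_degree E i = card {e \<in> E. i \<in> e \<and> e \<subseteq> {0..i}}"

definition degeneracy_ordering :: "nat \<Rightarrow> nat set set \<Rightarrow> nat \<Rightarrow> bool" where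
  "degeneracy_ordering n E d \<longleftrightarrow> (\<forall>i<n. back_degree E i \<le> d)"

text \<open>Local k-partitions: c e v is c_v(e) for v in e, e in E (extensional elsewhere).\<close>
definition local_partitions :: "nat set set \<Rightarrow> nat \<Rightarrow> (nat set \<Rightarrow> nat \<Rightarrow> nat) set" where
  "local_partitions E k = PiE E (\<lambda>e. e \<rightarrow>\<^sub>E {1..k})"

text \<open>Random local k-partition: uniform over all local k-partitions, i.e. the tuples
  (c_v(e))_{v in e} are independent uniform over [k]^r for different edges.\<close>
definition random_local_partition :: "nat set set \<Rightarrow> nat \<Rightarrow> (nat set \<Rightarrow> nat \<Rightarrow> nat) pmf" where
  "random_local_partition E k = pmf_of_set (local_partitions E k)"

definition avail :: "nat set set \<Rightarrow> nat \<Rightarrow> (nat set \<Rightarrow> nat \<Rightarrow> nat) \<Rightarrow> (nat \<Rightarrow> nat) \<Rightarrow> nat \<Rightarrow> nat set" where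
  "avail E k c phi i = {1..k} - {c e i | e. e \<in> E \<and> i \<in> e \<and> e \<subseteq> {0..i} \<and> (\<forall>u \<in> e - {i}. phi u = c e u)}"

text \<open>greedy_phi E k c i agrees with the greedy colouring phi on the vertices 0..i.\<close>
fun greedy_phi :: "nat set set \<Rightarrow> nat \<Rightarrow> (nat set \<Rightarrow> nat \<Rightarrow> nat) \<Rightarrow> nat \<Rightarrow> (nat \<Rightarrow> nat)" where
  "greedy_phi E k c 0 = (\<lambda>v. 1)"
| "greedy_phi E k c (Suc i) =
     (let phi = greedy_phi E k c i; L = avail E k c phi (Suc i)
      in phi(Suc i := (if L \<noteq> {} then Min L else 1)))"

definition greedy_L :: "nat set set \<Rightarrow> nat \<Rightarrow> (nat set \<Rightarrow> nat \<Rightarrow> nat) \<Rightarrow> nat \<Rightarrow> nat set" where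
  "greedy_L E k c i = (if i = 0 then {1..k} else avail E k c (greedy_phi E k c (i - 1)) i)"

end

theory Submission
  imports Defs
begin


lemma prob_pair_times:
  "measure_pmf.prob (pair_pmf M N) (A \<times> B) = measure_pmf.prob M A * measure_pmf.prob N B"
proof -
  have "measure_pmf.prob (pair_pmf M N) (A \<times> B) =
        measure_pmf.prob (pair_pmf M N) ((A \<inter> set_pmf M) \<times> (B \<inter> set_pmf N))"
    by (subst measure_Int_set_pmf[symmetric]) (simp add: Times_Int_Times)
  also have "\<dots> = measure_pmf.prob M (A \<inter> set_pmf M) * measure_pmf.prob N (B \<inter> set_pmf N)"
    by (rule measure_pmf_prob_product) (auto intro: countable_subset)
  finally show ?thesis by (simp add: measure_Int_set_pmf)
qed

definition hh :: "'e set \<Rightarrow> 'v \<Rightarrow> ('e \<Rightarrow> 'v pmf) \<Rightarrow> 'v set \<Rightarrow> 'v set \<Rightarrow> real" where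
  "hh B dflt D S T = measure_pmf.prob (Pi_pmf B dflt D) {w. S \<subseteq> w ` B \<and> T \<inter> w ` B = {}}"

lemma hh_empty: "hh {} dflt D S T = (if S = {} then 1 else 0)"
  by (simp add: hh_def)

lemma hh_insert:
  assumes fin: "finite B" and e: "e \<notin> B" and ST: "S \<inter> T = {}" "finite S" "finite T"
    and pm: "\<forall>l\<in>S \<union> T. pmf (D e) l = p"
  shows "hh (insert e B) dflt D S T =
     (\<Sum>l\<in>S. p * hh B dflt D (S - {l}) T) + (1 - real (card S + card T) * p) * hh B dflt D S T"
proof -
  let ?M = "pair_pmf (D e) (Pi_pmf B dflt D)"
  define F where "F l = {f. S - {l} \<subseteq> f ` B \<and> T \<inter> f ` B = {}}" for l
  define G where "G = {f. S \<subseteq> f ` B \<and> T \<inter> f ` B = {}}"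
  have img: "(f(e:=y)) ` insert e B = insert y (f ` B)" for f :: "'a \<Rightarrow> 'b" and y
    using e by auto
  have pre: "(\<lambda>(y,f). f(e:=y)) -` {w. S \<subseteq> w ` insert e B \<and> T \<inter> w ` insert e B = {}}
      = (\<Union>l\<in>S. {l} \<times> F l) \<union> (-(S \<union> T)) \<times> G"
  proof -
    have "(\<lambda>(y,f). f(e:=y)) -` {w. S \<subseteq> w ` insert e B \<and> T \<inter> w ` insert e B = {}}
       = {(y,f). S \<subseteq> insert y (f ` B) \<and> T \<inter> insert y (f ` B) = {}}"
      by (rule set_eqI, rename_tac x, case_tac x) (simp only: vimage_def mem_Collect_eq case_prod_conv img)
    also have "\<dots> = (\<Union>l\<in>S. {l} \<times> F l) \<union> (-(S \<union> T)) \<times> G"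
      unfolding F_def G_def using ST(1) by auto
    finally show ?thesis .
  qed
  have "hh (insert e B) dflt D S T = measure_pmf.prob ?M ((\<Union>l\<in>S. {l} \<times> F l) \<union> (-(S \<union> T)) \<times> G)"
    unfolding hh_def by (simp only: Pi_pmf_insert[OF fin e] measure_map_pmf pre)
  also have "\<dots> = measure_pmf.prob ?M (\<Union>l\<in>S. {l} \<times> F l) + measure_pmf.prob ?M ((-(S \<union> T)) \<times> G)"
    by (rule measure_pmf.finite_measure_Union) auto
  also have "measure_pmf.prob ?M (\<Union>l\<in>S. {l} \<times> F l) = (\<Sum>l\<in>S. measure_pmf.prob ?M ({l} \<times> F l))"
    by (rule measure_pmf.finite_measure_finite_Union) (auto simp: disjoint_family_on_def ST)
  also have "\<dots> = (\<Sum>l\<in>S. p * hh B dflt D (S-{l}) T)"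
    by (intro sum.cong refl) (simp add: prob_pair_times measure_pmf_single hh_def F_def pm)
  also have "measure_pmf.prob ?M ((-(S \<union> T)) \<times> G) = (1 - real (card S + card T) * p) * hh B dflt D S T"
  proof -
    have "measure_pmf.prob (D e) (-(S \<union> T)) = 1 - measure_pmf.prob (D e) (S \<union> T)"
      using measure_pmf.prob_compl[of "S \<union> T" "D e"] by (simp add: Compl_eq_Diff_UNIV)
    also have "measure_pmf.prob (D e) (S \<union> T) = (\<Sum>l\<in>S \<union> T. pmf (D e) l)"
      using ST by (simp add: measure_measure_pmf_finite)
    also have "\<dots> = real (card S + card T) * p"
      using ST pm by (simp add: card_Un_disjoint)
    finally show ?thesis by (simp add: prob_pair_times hh_def G_def)
  qed
  finally show ?thesis .
qed

lemma hh_nonneg: "0 \<le> hh B dflt D S T"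
  by (simp add: hh_def)

lemma hh_none: "hh B dflt D {} {} = 1"
  by (simp add: hh_def)

lemma hh_a:
  assumes "finite B" "\<forall>e\<in>B. pmf (D e) j = p"
  shows "hh B dflt D {} {j} = (1 - p) ^ card B"
  using assms
proof (induction B rule: finite_induct)
  case empty
  then show ?case by (simp add: hh_empty)
next
  case (insert e B)
  have "hh (insert e B) dflt D {} {j} = (1 - p) * hh B dflt D {} {j}"
    using hh_insert[of B e "{}" "{j}" D p dflt] insert by simp
  then show ?case using insert by simp
qed

lemma hh_mono:
  assumes "S' \<subseteq> S"
  shows "hh B dflt D S T \<le> hh B dflt D S' T"
  unfolding hh_def using assms
  by (intro measure_pmf.finite_measure_mono) auto

lemma hh_split:
  assumes "j \<notin> S"
  shows "hh B dflt D S {} = hh B dflt D (insert j S) {} + hh B dflt D S {j}"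
proof -
  have "{w. S \<subseteq> w ` B \<and> {} \<inter> w ` B = {}} =
        {w. insert j S \<subseteq> w ` B \<and> {} \<inter> w ` B = {}} \<union> {w. S \<subseteq> w ` B \<and> {j} \<inter> w ` B = {}}"
    by auto
  then show ?thesis unfolding hh_def
    by (simp only:) (rule measure_pmf.finite_measure_Union, auto)
qed

lemma hh_b:
  fixes D :: "'e \<Rightarrow> nat pmf"
  assumes "finite B" "0 < k" "\<forall>e\<in>B. \<forall>l\<in>{1..k}. pmf (D e) l = p"
    and "S \<subseteq> {1..k}" "j \<in> {1..k}" "j \<notin> S"
  shows "hh B dflt D S {} * hh B dflt D {} {j} \<le> hh B dflt D S {j}"
  using assms
proof (induction B arbitrary: S rule: finite_induct)
  case empty
  then show ?case by (simp add: hh_empty)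
next
  case (insert e B)
  have pm: "\<forall>l\<in>{1..k}. pmf (D e) l = p" using insert by simp
  have p0: "0 \<le> p" using pm insert(4) by (metis atLeastAtMost_iff le_refl less_one not_less pmf_nonneg)
  have "real k * p = (\<Sum>l\<in>{1..k}. pmf (D e) l)" using pm by simp
  also have "\<dots> = measure_pmf.prob (D e) {1..k}" by (simp add: measure_measure_pmf_finite)
  also have "\<dots> \<le> 1" by simp
  finally have kp: "real k * p \<le> 1" .
  have finS: "finite S" using insert(6) finite_subset by blast
  have "card (insert j S) \<le> card {1..k}" using insert(6,7) by (intro card_mono) auto
  then have sk: "card S + 1 \<le> k" using insert(8) finS by simp
  define s where "s = card S"
  define N where "N = hh B dflt D {} {j}"
  define A where "A = hh B dflt D S {}"
  define a where "a = hh B dflt D S {j}"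
  define Bl where "Bl l = hh B dflt D (S - {l}) {}" for l
  define bl where "bl l = hh B dflt D (S - {l}) {j}" for l
  define S1 where "S1 = (\<Sum>l\<in>S. Bl l)"
  have pmST: "\<forall>l\<in>S \<union> {j}. pmf (D e) l = p" using pm insert(6,7) by auto
  have e1: "hh (insert e B) dflt D S {} = p * S1 + (1 - real s * p) * A"
    using hh_insert[of B e S "{}" D p dflt] insert(1,2) finS pmST
    by (simp add: s_def A_def Bl_def S1_def sum_distrib_left)
  have e2: "hh (insert e B) dflt D {} {j} = (1 - p) * N"
    using hh_insert[of B e "{}" "{j}" D p dflt] insert(1,2) pmST by (simp add: N_def)
  have e3: "hh (insert e B) dflt D S {j} = (\<Sum>l\<in>S. p * bl l) + (1 - (real s + 1) * p) * a"
    using hh_insert[of B e S "{j}" D p dflt] insert(1,2,8) finS pmST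
    by (simp add: s_def a_def bl_def)
  have IH1: "Bl l * N \<le> bl l" if "l \<in> S" for l
    unfolding Bl_def N_def bl_def using insert that by (intro insert.IH) auto
  have IH2: "A * N \<le> a"
    unfolding A_def N_def a_def using insert by (intro insert.IH) auto
  have "(\<Sum>l\<in>S. p * bl l) \<ge> (\<Sum>l\<in>S. p * (Bl l * N))"
    using IH1 p0 by (intro sum_mono mult_left_mono) auto
  then have s1: "(\<Sum>l\<in>S. p * bl l) \<ge> p * N * S1"
    by (simp add: S1_def sum_distrib_left mult_ac)
  have "(1 - (real s + 1) * p) \<ge> 0"
  proof -
    have "(real s + 1) * p \<le> real k * p" using sk p0 by (intro mult_right_mono) (auto simp: s_def)
    then show ?thesis using kp by linarith
  qed
  then have s2: "(1 - (real s + 1) * p) * a \<ge> (1 - (real s + 1) * p) * (A * N)"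
    using IH2 by (intro mult_left_mono) auto
  have "S1 \<ge> (\<Sum>l\<in>S. A)" unfolding S1_def Bl_def A_def
    by (intro sum_mono hh_mono) auto
  then have s3: "S1 \<ge> real s * A" by (simp add: s_def)
  have N0: "N \<ge> 0" by (simp add: N_def hh_nonneg)
  have "(p * S1 + (1 - real s * p) * A) * ((1 - p) * N) =
        p * N * S1 + (1 - (real s + 1) * p) * (A * N) - N * p^2 * (S1 - real s * A)"
    by (simp add: algebra_simps power2_eq_square)
  also have "\<dots> \<le> p * N * S1 + (1 - (real s + 1) * p) * (A * N)"
    using N0 s3 by (simp add: mult_nonneg_nonneg)
  finally show ?case using e1 e2 e3 s1 s2 by simp
qed

lemma hh_c:
  fixes D :: "'e \<Rightarrow> nat pmf"
  assumes "finite B" "0 < k" "\<forall>e\<in>B. \<forall>l\<in>{1..k}. pmf (D e) l = p"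
    and "J \<subseteq> {1..k}"
  shows "hh B dflt D J {} \<le> (\<Prod>j\<in>J. hh B dflt D {j} {})"
proof -
  have "finite J" using assms(4) finite_subset by blast
  then show ?thesis using assms(4)
  proof (induction J rule: finite_induct)
    case empty
    then show ?case by (simp add: hh_none)
  next
    case (insert j S)
    have sp: "hh B dflt D S {} = hh B dflt D (insert j S) {} + hh B dflt D S {j}"
      using insert(2) by (rule hh_split)
    have sp1: "1 = hh B dflt D {j} {} + hh B dflt D {} {j}"
      using hh_split[of j "{}" B dflt D] by (simp add: hh_none)
    have b: "hh B dflt D S {} * hh B dflt D {} {j} \<le> hh B dflt D S {j}"
      using insert assms by (intro hh_b[where k=k and p=p]) auto
    have "hh B dflt D (insert j S) {} \<le> hh B dflt D S {} * hh B dflt D {j} {}"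
    proof -
      have "hh B dflt D S {} * hh B dflt D {j} {} = hh B dflt D S {} - hh B dflt D S {} * hh B dflt D {} {j}"
      proof -
        have "hh B dflt D {j} {} = 1 - hh B dflt D {} {j}" using sp1 by linarith
        then show ?thesis by (simp only: right_diff_distrib mult_1_right)
      qed
      then show ?thesis using sp b by linarith
    qed
    also have "\<dots> \<le> (\<Prod>j\<in>S. hh B dflt D {j} {}) * hh B dflt D {j} {}"
      using insert by (intro mult_right_mono hh_nonneg) auto
    finally show ?case using insert by (simp add: mult_ac)
  qed
qed



definition kill :: "(nat \<Rightarrow> nat) \<Rightarrow> nat \<Rightarrow> nat set \<Rightarrow> (nat \<Rightarrow> nat) \<Rightarrow> nat" where
  "kill phi i e x = (if \<forall>u\<in>e-{i}. phi u = x u then x i else 0)"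

lemma avail_sub: "avail E k c phi i \<subseteq> {1..k}"
  by (auto simp: avail_def)

lemma gphi_range:
  assumes "0 < k" shows "greedy_phi E k c m u \<in> {1..k}"
proof (induction m arbitrary: u)
  case 0
  then show ?case using assms by simp
next
  case (Suc m)
  let ?L = "avail E k c (greedy_phi E k c m) (Suc m)"
  have fin: "finite ?L" by (rule finite_subset[OF avail_sub]) simp
  have "?L \<noteq> {} \<Longrightarrow> Min ?L \<in> {1..k}"
    using Min_in[OF fin] subsetD[OF avail_sub] by metis
  then have "(if ?L \<noteq> {} then Min ?L else 1) \<in> {1..k}" using assms by simp
  moreover have "greedy_phi E k c (Suc m) u =
     (if u = Suc m then (if ?L \<noteq> {} then Min ?L else 1) else greedy_phi E k c m u)"
    by (simp add: Let_def)
  ultimately show ?case using Suc.IH by simp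
qed

lemma avail_cong:
  assumes "\<forall>e\<in>E. e \<subseteq> {0..i} \<longrightarrow> c e = c' e"
  shows "avail E k c phi i = avail E k c' phi i"
proof -
  have "{c e i | e. e \<in> E \<and> i \<in> e \<and> e \<subseteq> {0..i} \<and> (\<forall>u \<in> e - {i}. phi u = c e u)} =
        {c' e i | e. e \<in> E \<and> i \<in> e \<and> e \<subseteq> {0..i} \<and> (\<forall>u \<in> e - {i}. phi u = c' e u)}"
    using assms by (metis (no_types, lifting))
  then show ?thesis by (simp add: avail_def)
qed

lemma gphi_local:
  "(\<forall>e\<in>E. e \<subseteq> {0..m} \<longrightarrow> c e = c' e) \<Longrightarrow> greedy_phi E k c m = greedy_phi E k c' m"
proof (induction m)
  case 0
  then show ?case by simp
next
  case (Suc m)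
  have "greedy_phi E k c m = greedy_phi E k c' m"
  proof (intro Suc.IH ballI impI)
    fix e assume e: "e \<in> E" "e \<subseteq> {0..m}"
    then have "e \<subseteq> {0..Suc m}" by auto
    then show "c e = c' e" using Suc.prems e(1) by blast
  qed
  moreover have "avail E k c (greedy_phi E k c' m) (Suc m) = avail E k c' (greedy_phi E k c' m) (Suc m)"
    using Suc.prems by (intro avail_cong) auto
  ultimately show ?case by (metis greedy_phi.simps(2))
qed

lemma rlp_Pi:
  assumes "finite E" "\<forall>e\<in>E. finite e" "0 < k"
  shows "random_local_partition E k = Pi_pmf E undefined (\<lambda>e. pmf_of_set (e \<rightarrow>\<^sub>E {1..k}))"
proof -
  have "PiE_dflt E undefined (\<lambda>e. e \<rightarrow>\<^sub>E {1..k}) = local_partitions E k"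
    by (auto simp: PiE_dflt_def local_partitions_def PiE_def extensional_def Pi_def)
  moreover have "Pi_pmf E undefined (\<lambda>e. pmf_of_set (e \<rightarrow>\<^sub>E {1..k})) =
      pmf_of_set (PiE_dflt E undefined (\<lambda>e. e \<rightarrow>\<^sub>E {1..k}))"
    using assms by (intro Pi_pmf_of_set) (auto simp: PiE_eq_empty_iff finite_PiE)
  ultimately show ?thesis by (simp add: random_local_partition_def)
qed

lemma kill_pmf:
  assumes "finite e" "card e = r" "i \<in> e" "\<forall>u. phi u \<in> {1..k}" "l \<in> {1..k}"
  shows "pmf (map_pmf (kill phi i e) (pmf_of_set (e \<rightarrow>\<^sub>E {1..k}))) l = 1 / real k ^ r"
proof -
  define x0 where "x0 = (\<lambda>u\<in>e. if u = i then l else phi u)"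
  have x0in: "x0 \<in> e \<rightarrow>\<^sub>E {1..k}" using assms(4,5) by (auto simp: x0_def)
  have "(e \<rightarrow>\<^sub>E {1..k}) \<inter> kill phi i e -` {l} = {x0}"
  proof (intro equalityI subsetI)
    fix x assume x: "x \<in> (e \<rightarrow>\<^sub>E {1..k}) \<inter> kill phi i e -` {l}"
    then have l0: "kill phi i e x = l" by simp
    have m: "\<forall>u\<in>e-{i}. phi u = x u" and xi: "x i = l"
      using l0 assms(5) by (auto simp: kill_def split: if_splits)
    show "x \<in> {x0}"
    proof -
      have "x = x0"
      proof
        fix u show "x u = x0 u"
          using x m xi by (cases "u \<in> e") (auto simp: x0_def PiE_def extensional_def)
      qed
      then show ?thesis by simp
    qed
  next
    fix x assume "x \<in> {x0}"
    then show "x \<in> (e \<rightarrow>\<^sub>E {1..k}) \<inter> kill phi i e -` {l}"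
      using x0in assms(3) by (auto simp: kill_def x0_def)
  qed
  moreover have "card (e \<rightarrow>\<^sub>E {1..k}) = k ^ r"
    using assms by (simp add: card_PiE)
  moreover have "e \<rightarrow>\<^sub>E {1..k} \<noteq> {}" using x0in by blast
  moreover have "finite (e \<rightarrow>\<^sub>E {1..k})" using assms by (simp add: finite_PiE)
  ultimately show ?thesis
    by (simp add: pmf_map measure_pmf_of_set)
qed

lemma map_pair_pmf': "map_pmf h (pair_pmf A B) = bind_pmf A (\<lambda>a. map_pmf (\<lambda>b. h (a,b)) B)"
  by (simp add: pair_pmf_def map_bind_pmf map_pmf_def bind_assoc_pmf bind_return_pmf)

lemma Pi_map_kill:
  assumes "finite B"
  shows "Pi_pmf B (0::nat) (\<lambda>e. map_pmf (K e) (U e)) =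
         map_pmf (\<lambda>g e. if e \<in> B then K e (g e) else 0) (Pi_pmf B undefined U)"
proof -
  have "Pi_pmf B (0::nat) (\<lambda>e. map_pmf (K e) (U e)) =
        Pi_pmf B 0 (\<lambda>e. bind_pmf (U e) (\<lambda>y. return_pmf (K e y)))"
    by (simp add: map_pmf_def)
  also have "\<dots> = bind_pmf (Pi_pmf B undefined U) (\<lambda>f. Pi_pmf B 0 (\<lambda>e. return_pmf (K e (f e))))"
    using assms by (rule Pi_pmf_bind)
  also have "\<dots> = map_pmf (\<lambda>g e. if e \<in> B then K e (g e) else 0) (Pi_pmf B undefined U)"
    using assms by (simp add: map_pmf_def)
  finally show ?thesis .
qed

lemma reduce:
  assumes finE: "finite E" and fe: "\<forall>e\<in>E. finite e" and k: "0 < k"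
    and Bdef: "B = {e\<in>E. Suc i' \<in> e \<and> e \<subseteq> {0..Suc i'}}"
  shows "map_pmf (\<lambda>c e. if e \<in> B then kill (greedy_phi E k c i') (Suc i') e (c e) else 0)
           (random_local_partition E k)
       = bind_pmf (Pi_pmf (E - B) undefined (\<lambda>e. pmf_of_set (e \<rightarrow>\<^sub>E {1..k})))
           (\<lambda>f. Pi_pmf B 0 (\<lambda>e. map_pmf (kill (greedy_phi E k f i') (Suc i') e) (pmf_of_set (e \<rightarrow>\<^sub>E {1..k}))))"
proof -
  let ?U = "\<lambda>e. pmf_of_set (e \<rightarrow>\<^sub>E {1..k})"
  let ?R = "E - B"
  let ?Phi = "\<lambda>c e. if e \<in> B then kill (greedy_phi E k c i') (Suc i') e (c e) else 0"
  let ?mg = "\<lambda>(f,g) x. if x \<in> ?R then f x else g x"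
  have finB: "finite B" and finR: "finite ?R" using finE Bdef by auto
  have E: "E = ?R \<union> B" using Bdef by auto
  have "random_local_partition E k = Pi_pmf (?R \<union> B) undefined ?U"
    using rlp_Pi[OF finE fe k] E by simp
  also have "\<dots> = map_pmf ?mg (pair_pmf (Pi_pmf ?R undefined ?U) (Pi_pmf B undefined ?U))"
    using finR finB by (intro Pi_pmf_union) auto
  finally have r: "random_local_partition E k = \<dots>" .
  have loc: "greedy_phi E k (?mg (f,g)) i' = greedy_phi E k f i'" for f g
  proof (intro gphi_local ballI impI)
    fix e assume "e \<in> E" "e \<subseteq> {0..i'}"
    then have "e \<in> ?R" using Bdef by auto
    then show "?mg (f,g) e = f e" by simp
  qed
  have "map_pmf ?Phi (random_local_partition E k) =
        bind_pmf (Pi_pmf ?R undefined ?U) (\<lambda>f. map_pmf (\<lambda>g. ?Phi (?mg (f,g))) (Pi_pmf B undefined ?U))"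
    by (subst r, subst map_pmf_comp, subst map_pair_pmf', simp only: case_prod_conv)
  also have "\<dots> = bind_pmf (Pi_pmf ?R undefined ?U)
      (\<lambda>f. map_pmf (\<lambda>g e. if e \<in> B then kill (greedy_phi E k f i') (Suc i') e (g e) else 0) (Pi_pmf B undefined ?U))"
  proof (intro bind_pmf_cong refl map_pmf_cong ext)
    fix f g e
    show "?Phi (?mg (f,g)) e = (if e \<in> B then kill (greedy_phi E k f i') (Suc i') e (g e) else 0)"
      using loc[of f g] by auto
  qed
  also have "\<dots> = bind_pmf (Pi_pmf ?R undefined ?U)
      (\<lambda>f. Pi_pmf B 0 (\<lambda>e. map_pmf (kill (greedy_phi E k f i') (Suc i') e) (?U e)))"
    using finB by (simp add: Pi_map_kill)
  finally show ?thesis .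
qed



lemma prob_bind_le:
  assumes "\<And>x. x \<in> set_pmf M \<Longrightarrow> measure_pmf.prob (N x) A \<le> q"
  shows "measure_pmf.prob (bind_pmf M N) A \<le> q"
proof -
  obtain x0 where "x0 \<in> set_pmf M" using set_pmf_not_empty[of M] by blast
  then have q0: "0 \<le> q" using assms[of x0] measure_nonneg order_trans by blast
  have "ennreal (measure_pmf.prob (bind_pmf M N) A) = emeasure (bind_pmf M N) A"
    by (simp add: measure_pmf.emeasure_eq_measure)
  also have "\<dots> = (\<integral>\<^sup>+x. emeasure (N x) A \<partial>M)" by simp
  also have "\<dots> \<le> (\<integral>\<^sup>+x. ennreal q \<partial>M)"
    by (intro nn_integral_mono_AE)
       (auto simp: AE_measure_pmf_iff measure_pmf.emeasure_eq_measure intro: ennreal_leI assms)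
  also have "\<dots> = ennreal q" by (simp add: measure_pmf.emeasure_space_1)
  finally show ?thesis using q0 by simp
qed

lemma prob_bind_eq:
  assumes "\<And>x. x \<in> set_pmf M \<Longrightarrow> measure_pmf.prob (N x) A = q"
  shows "measure_pmf.prob (bind_pmf M N) A = q"
proof -
  obtain x0 where "x0 \<in> set_pmf M" using set_pmf_not_empty[of M] by blast
  then have q0: "0 \<le> q" using assms[of x0] measure_nonneg by metis
  have "ennreal (measure_pmf.prob (bind_pmf M N) A) = emeasure (bind_pmf M N) A"
    by (simp add: measure_pmf.emeasure_eq_measure)
  also have "\<dots> = (\<integral>\<^sup>+x. emeasure (N x) A \<partial>M)" by simp
  also have "\<dots> = (\<integral>\<^sup>+x. ennreal q \<partial>M)"
    by (intro nn_integral_cong_AE)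
       (auto simp: AE_measure_pmf_iff measure_pmf.emeasure_eq_measure assms)
  also have "\<dots> = ennreal q" by (simp add: measure_pmf.emeasure_space_1)
  finally show ?thesis using q0 by simp
qed

lemma step:
  fixes i' :: nat
  assumes H: "r_uniform_hypergraph n r E" and k: "0 < k"
  defines "m \<equiv> back_degree E (Suc i')" and "p \<equiv> 1 / real k ^ r"
  shows "(\<forall>j\<in>{1..k}. measure_pmf.prob (random_local_partition E k)
            {c. j \<in> greedy_L E k c (Suc i')} = (1 - p) ^ m)
     \<and> (\<forall>j\<in>{1..k}. measure_pmf.prob (random_local_partition E k)
            {c. j \<notin> greedy_L E k c (Suc i')} = 1 - (1 - p) ^ m)
     \<and> (\<forall>J. J \<subseteq> {1..k} \<longrightarrow> measure_pmf.prob (random_local_partition E k)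
            {c. \<forall>j\<in>J. j \<notin> greedy_L E k c (Suc i')} \<le> (1 - (1 - p) ^ m) ^ card J)"
proof -
  let ?RLP = "random_local_partition E k"
  define i where "i = Suc i'"
  define B where "B = {e\<in>E. i \<in> e \<and> e \<subseteq> {0..i}}"
  define Phi where "Phi = (\<lambda>c e. if e \<in> B then kill (greedy_phi E k c i') i e (c e) else 0)"
  define U where "U = (\<lambda>e::nat set. pmf_of_set (e \<rightarrow>\<^sub>E {1..k}))"
  define D where "D = (\<lambda>phi e. map_pmf (kill phi i e) (U e))"
  define Q where "Q = bind_pmf (Pi_pmf (E - B) undefined U) (\<lambda>f. Pi_pmf B 0 (D (greedy_phi E k f i')))"
  have Esub: "E \<subseteq> Pow {0..<n}" and cardE: "\<forall>e\<in>E. card e = r"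
    using H by (auto simp: r_uniform_hypergraph_def)
  have finE: "finite E" using Esub by (rule finite_subset) simp
  have fe: "\<forall>e\<in>E. finite e" using Esub by (auto intro: finite_subset)
  have mapeq: "map_pmf Phi ?RLP = Q"
    unfolding Phi_def Q_def D_def U_def i_def
    by (rule reduce[OF finE fe k]) (simp add: B_def i_def)
  have finB: "finite B" using finE by (simp add: B_def)
  have mB: "card B = m" by (simp add: m_def back_degree_def B_def i_def)
  have Dp: "\<forall>e\<in>B. \<forall>l\<in>{1..k}. pmf (D (greedy_phi E k f i') e) l = p" for f
  proof (intro ballI)
    fix e l assume e: "e \<in> B" and l: "l \<in> {1..k}"
    show "pmf (D (greedy_phi E k f i') e) l = p"
    proof -
      have eE: "e \<in> E" and ie: "i \<in> e" using e by (auto simp: B_def)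
      have f1: "finite e" using fe eE by blast
      have f2: "card e = r" using cardE eE by blast
      have f4: "\<forall>u. greedy_phi E k f i' u \<in> {1..k}" using gphi_range[OF k] by blast
      show ?thesis unfolding D_def U_def p_def by (rule kill_pmf[OF f1 f2 ie f4 l])
    qed
  qed
  have probQ: "measure_pmf.prob ?RLP (Phi -` X) = measure_pmf.prob Q X" for X
    by (simp add: mapeq[symmetric])
  have hhQ: "measure_pmf.prob Q {w. S \<subseteq> w ` B \<and> T \<inter> w ` B = {}} =
     measure_pmf.prob (bind_pmf (Pi_pmf (E - B) undefined U) (\<lambda>f. Pi_pmf B 0 (D (greedy_phi E k f i'))))
       {w. S \<subseteq> w ` B \<and> T \<inter> w ` B = {}}" for S T
    by (simp add: Q_def)
  have ev: "(j \<notin> greedy_L E k c i) = (j \<in> Phi c ` B)" if j: "j \<in> {1..k}" for j c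
  proof -
    have "greedy_L E k c i = avail E k c (greedy_phi E k c i') i"
      by (simp add: greedy_L_def i_def)
    moreover have "(j \<notin> avail E k c (greedy_phi E k c i') i) =
        (\<exists>e\<in>B. (\<forall>u\<in>e-{i}. greedy_phi E k c i' u = c e u) \<and> c e i = j)"
      using j by (auto simp: avail_def B_def)
    moreover have "(j \<in> Phi c ` B) =
        (\<exists>e\<in>B. (\<forall>u\<in>e-{i}. greedy_phi E k c i' u = c e u) \<and> c e i = j)"
      using j by (auto simp: Phi_def kill_def)
    ultimately show ?thesis by simp
  qed
  have F1: "measure_pmf.prob ?RLP {c. j \<in> greedy_L E k c i} = (1 - p) ^ m" if j: "j \<in> {1..k}" for j
  proof -
    have "{c. j \<in> greedy_L E k c i} = Phi -` {w. {} \<subseteq> w ` B \<and> {j} \<inter> w ` B = {}}"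
      using ev[OF j] by auto
    note seq = this
    have "measure_pmf.prob ?RLP {c. j \<in> greedy_L E k c i} =
       measure_pmf.prob Q {w. {} \<subseteq> w ` B \<and> {j} \<inter> w ` B = {}}" unfolding seq by (rule probQ)
    also have "\<dots> = (1 - p) ^ m" unfolding Q_def
    proof (rule prob_bind_eq)
      fix f
      show "measure_pmf.prob (Pi_pmf B 0 (D (greedy_phi E k f i'))) {w. {} \<subseteq> w ` B \<and> {j} \<inter> w ` B = {}}
            = (1 - p) ^ m"
        using hh_a[OF finB, of "D (greedy_phi E k f i')" j p 0] Dp[of f] j mB
        by (simp add: hh_def)
    qed
    finally show ?thesis .
  qed
  have F2: "measure_pmf.prob ?RLP {c. j \<notin> greedy_L E k c i} = 1 - (1 - p) ^ m" if j: "j \<in> {1..k}" for j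
  proof -
    have "{c. j \<notin> greedy_L E k c i} = Phi -` {w. {j} \<subseteq> w ` B \<and> {} \<inter> w ` B = {}}"
      using ev[OF j] by auto
    note seq = this
    have "measure_pmf.prob ?RLP {c. j \<notin> greedy_L E k c i} =
       measure_pmf.prob Q {w. {j} \<subseteq> w ` B \<and> {} \<inter> w ` B = {}}" unfolding seq by (rule probQ)
    also have "\<dots> = 1 - (1 - p) ^ m" unfolding Q_def
    proof (rule prob_bind_eq)
      fix f
      have "hh B 0 (D (greedy_phi E k f i')) {} {j} = (1 - p) ^ m"
        using hh_a[OF finB, of "D (greedy_phi E k f i')" j p 0] Dp[of f] j mB by simp
      moreover have "hh B 0 (D (greedy_phi E k f i')) {} {} =
          hh B 0 (D (greedy_phi E k f i')) {j} {} + hh B 0 (D (greedy_phi E k f i')) {} {j}"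
        by (rule hh_split) simp
      ultimately have "hh B 0 (D (greedy_phi E k f i')) {j} {} = 1 - (1 - p) ^ m"
        by (simp add: hh_none)
      then show "measure_pmf.prob (Pi_pmf B 0 (D (greedy_phi E k f i'))) {w. {j} \<subseteq> w ` B \<and> {} \<inter> w ` B = {}}
            = 1 - (1 - p) ^ m"
        by (simp add: hh_def)
    qed
    finally show ?thesis .
  qed
  have F3: "measure_pmf.prob ?RLP {c. \<forall>j\<in>J. j \<notin> greedy_L E k c i} \<le> (1 - (1 - p) ^ m) ^ card J"
    if J: "J \<subseteq> {1..k}" for J
  proof -
    have "{c. \<forall>j\<in>J. j \<notin> greedy_L E k c i} = Phi -` {w. J \<subseteq> w ` B \<and> {} \<inter> w ` B = {}}"
    proof (intro equalityI subsetI)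
      fix c assume "c \<in> {c. \<forall>j\<in>J. j \<notin> greedy_L E k c i}"
      then show "c \<in> Phi -` {w. J \<subseteq> w ` B \<and> {} \<inter> w ` B = {}}" using ev J by blast
    next
      fix c assume "c \<in> Phi -` {w. J \<subseteq> w ` B \<and> {} \<inter> w ` B = {}}"
      then show "c \<in> {c. \<forall>j\<in>J. j \<notin> greedy_L E k c i}" using ev J by blast
    qed
    note seq = this
    have "measure_pmf.prob ?RLP {c. \<forall>j\<in>J. j \<notin> greedy_L E k c i} =
       measure_pmf.prob Q {w. J \<subseteq> w ` B \<and> {} \<inter> w ` B = {}}" unfolding seq by (rule probQ)
    also have "\<dots> \<le> (1 - (1 - p) ^ m) ^ card J" unfolding Q_def
    proof (rule prob_bind_le)
      fix f
      let ?D = "D (greedy_phi E k f i')"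
      have one: "hh B 0 ?D {j} {} = 1 - (1 - p) ^ m" if j: "j \<in> {1..k}" for j
      proof -
        have "hh B 0 ?D {} {j} = (1 - p) ^ m"
          using hh_a[OF finB, of ?D j p 0] Dp[of f] j mB by simp
        moreover have "hh B 0 ?D {} {} = hh B 0 ?D {j} {} + hh B 0 ?D {} {j}"
          by (rule hh_split) simp
        ultimately show ?thesis by (simp add: hh_none)
      qed
      have "hh B 0 ?D J {} \<le> (\<Prod>j\<in>J. hh B 0 ?D {j} {})"
        by (rule hh_c[OF finB k Dp J])
      also have "\<dots> = (\<Prod>j\<in>J. 1 - (1 - p) ^ m)"
        using J one by (intro prod.cong) auto
      finally show "measure_pmf.prob (Pi_pmf B 0 ?D) {w. J \<subseteq> w ` B \<and> {} \<inter> w ` B = {}}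
            \<le> (1 - (1 - p) ^ m) ^ card J"
        by (simp add: hh_def)
    qed
    finally show ?thesis .
  qed
  show ?thesis using F1 F2 F3 by (simp add: i_def)
qed



theorem lemma3p5:
  fixes n r d k :: nat and E :: "nat set set"
  assumes "r_uniform_hypergraph n r E"
    and "degeneracy_ordering n E d"
    and "0 < k"
  shows "(\<forall>i<n. \<forall>j\<in>{1..k}.
            measure_pmf.expectation (random_local_partition E k)
              (\<lambda>c. if j \<in> greedy_L E k c i then 1 else 0 :: real)
            \<ge> (1 - 1 / real k ^ r) ^ d)
       \<and> (\<forall>i<n. \<forall>J. J \<subseteq> {1..k} \<longrightarrow>
            measure_pmf.prob (random_local_partition E k) {c. \<forall>j\<in>J. j \<notin> greedy_L E k c i}
            \<le> (\<Prod>j\<in>J. measure_pmf.prob (random_local_partition E k) {c. j \<notin> greedy_L E k c i}))"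
proof -
  let ?RLP = "random_local_partition E k"
  define p where "p = 1 / real k ^ r"
  have kr: "1 \<le> real k ^ r" using assms(3) by (simp add: one_le_power)
  have p0: "0 \<le> p" using kr by (simp add: p_def)
  have p1: "p \<le> 1" unfolding p_def using kr assms(3) by (simp add: divide_le_eq_1)
  have exp_ind: "measure_pmf.expectation M (\<lambda>c. if P c then 1 else 0 :: real) = measure_pmf.prob M {c. P c}"
    for M :: "(nat set \<Rightarrow> nat \<Rightarrow> nat) pmf" and P
  proof -
    have "(\<lambda>c. if P c then 1 else 0 :: real) = indicator {c. P c}" by (auto simp: indicator_def)
    then show ?thesis by simp
  qed
  show ?thesis
  proof (intro conjI allI impI ballI)
    fix i j assume i: "i < n" and j: "j \<in> {1..k}"
    show "measure_pmf.expectation ?RLP (\<lambda>c. if j \<in> greedy_L E k c i then 1 else 0 :: real)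
          \<ge> (1 - 1 / real k ^ r) ^ d"
    proof (cases i)
      case 0
      have "measure_pmf.expectation ?RLP (\<lambda>c. if j \<in> greedy_L E k c i then 1 else 0 :: real) = 1"
        using j 0 by (simp add: greedy_L_def)
      moreover have "(1 - p) ^ d \<le> 1" using p0 p1 by (intro power_le_one) auto
      ultimately show ?thesis by (simp add: p_def)
    next
      case (Suc i')
      have "measure_pmf.expectation ?RLP (\<lambda>c. if j \<in> greedy_L E k c i then 1 else 0 :: real)
            = (1 - p) ^ back_degree E i"
        using step[OF assms(1) assms(3), of i'] j Suc exp_ind by (simp add: p_def)
      moreover have "back_degree E i \<le> d" using assms(2) i by (simp add: degeneracy_ordering_def)
      then have "(1 - p) ^ d \<le> (1 - p) ^ back_degree E i" using p0 p1 by (intro power_decreasing) auto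
      ultimately show ?thesis by (simp add: p_def)
    qed
  next
    fix i J assume i: "i < n" and J: "J \<subseteq> {1..k}"
    show "measure_pmf.prob ?RLP {c. \<forall>j\<in>J. j \<notin> greedy_L E k c i}
            \<le> (\<Prod>j\<in>J. measure_pmf.prob ?RLP {c. j \<notin> greedy_L E k c i})"
    proof (cases i)
      case 0
      show ?thesis
      proof (cases "J = {}")
        case True then show ?thesis by simp
      next
        case False
        then have "{c. \<forall>j\<in>J. j \<notin> greedy_L E k c i} = {}" using J 0 by (auto simp: greedy_L_def subset_iff)
        note e = this
        have "0 \<le> (\<Prod>j\<in>J. measure_pmf.prob ?RLP {c. j \<notin> greedy_L E k c i})"
          by (rule prod_nonneg) simp
        then show ?thesis unfolding e by simp
      qed
    next
      case (Suc i')
      define m where "m = back_degree E (Suc i')"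
      have st: "(\<forall>j\<in>{1..k}. measure_pmf.prob ?RLP {c. j \<notin> greedy_L E k c (Suc i')} = 1 - (1 - p) ^ m)
         \<and> (\<forall>J. J \<subseteq> {1..k} \<longrightarrow> measure_pmf.prob ?RLP
            {c. \<forall>j\<in>J. j \<notin> greedy_L E k c (Suc i')} \<le> (1 - (1 - p) ^ m) ^ card J)"
        using step[OF assms(1) assms(3), of i'] by (simp add: p_def m_def)
      have "(\<Prod>j\<in>J. measure_pmf.prob ?RLP {c. j \<notin> greedy_L E k c i}) = (\<Prod>j\<in>J. 1 - (1 - p) ^ m)"
        using st J Suc by (intro prod.cong) auto
      also have "\<dots> = (1 - (1 - p) ^ m) ^ card J" by simp
      finally show ?thesis using st J Suc by simp
    qed
  qed
qed

end
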